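(* Let $G$ be a finite simple graph with a normal spanning tree $T$ rooted at some vertex $r$, such that $G$ has no secant edges with respect to $T$. If $T$ is a star$^0$-like tree, then $\chi(G)\le 4$.
   Context: For a tree $T$ rooted at $r$, write $y\le_T x$ if $y$ lies on the $rx$-path of $T$. $T$ is normal in $G$ if for every edge $xy$ of $G$, $x\le_T y$ or $y\le_T x$. Two edges $e,e'$ of $G$ are secant with respect to $T$ if there is a path $P=x_1\dots x_n$ in $T$ with $x_1=r$ containing the ends of $e,e'$ such that, with respect to the enumeration $x_1\dots x_n$, both are jumps (an edge $x_ix_j$ with $|i-j|>1$) and, writing them $x_lx_m$, $x_px_q$ with $l<m$, $p<q$, we have $l<p<m<q$ or $p<l<q<m$. A star$^0$-like tree is a tree having exactly one vertex of degree strictly greater than $2$. *)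

theory Defs
  imports Main
begin

definition simple_graph :: "'a set \<Rightarrow> 'a set set \<Rightarrow> bool" where
  "simple_graph V E \<longleftrightarrow> (\<forall>e\<in>E. \<exists>u v. e = {u, v} \<and> u \<in> V \<and> v \<in> V \<and> u \<noteq> v)"

definition is_path :: "'a set \<Rightarrow> 'a set set \<Rightarrow> 'a list \<Rightarrow> bool" where
  "is_path V E P \<longleftrightarrow> P \<noteq> [] \<and> distinct P \<and> set P \<subseteq> V \<and>
     (\<forall>i. Suc i < length P \<longrightarrow> {P ! i, P ! Suc i} \<in> E)"

definition connected_graph :: "'a set \<Rightarrow> 'a set set \<Rightarrow> bool" where
  "connected_graph V E \<longleftrightarrow>
     (\<forall>u\<in>V. \<forall>v\<in>V. \<exists>P. is_path V E P \<and> hd P = u \<and> last P = v)"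

definition acyclic_graph :: "'a set \<Rightarrow> 'a set set \<Rightarrow> bool" where
  "acyclic_graph V E \<longleftrightarrow>
     \<not> (\<exists>C. 3 \<le> length C \<and> is_path V E C \<and> {last C, hd C} \<in> E)"

definition is_tree :: "'a set \<Rightarrow> 'a set set \<Rightarrow> bool" where
  "is_tree V E \<longleftrightarrow> simple_graph V E \<and> V \<noteq> {} \<and> connected_graph V E \<and> acyclic_graph V E"

definition spanning_tree :: "'a set \<Rightarrow> 'a set set \<Rightarrow> 'a set set \<Rightarrow> bool" where
  "spanning_tree V E TE \<longleftrightarrow> TE \<subseteq> E \<and> is_tree V TE"

definition tree_le :: "'a set \<Rightarrow> 'a set set \<Rightarrow> 'a \<Rightarrow> 'a \<Rightarrow> 'a \<Rightarrow> bool" where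
  "tree_le V TE r y x \<longleftrightarrow> (\<exists>P. is_path V TE P \<and> hd P = r \<and> last P = x \<and> y \<in> set P)"

definition normal_tree :: "'a set \<Rightarrow> 'a set set \<Rightarrow> 'a set set \<Rightarrow> 'a \<Rightarrow> bool" where
  "normal_tree V E TE r \<longleftrightarrow>
     (\<forall>x y. {x, y} \<in> E \<longrightarrow> tree_le V TE r x y \<or> tree_le V TE r y x)"

definition secant :: "'a set \<Rightarrow> 'a set set \<Rightarrow> 'a \<Rightarrow> 'a set \<Rightarrow> 'a set \<Rightarrow> bool" where
  "secant V TE r e e' \<longleftrightarrow>
     (\<exists>P l m p q. is_path V TE P \<and> hd P = r \<and>
        l < m \<and> p < q \<and> m < length P \<and> q < length P \<and>
        e = {P ! l, P ! m} \<and> e' = {P ! p, P ! q} \<and>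
        1 < m - l \<and> 1 < q - p \<and>
        ((l < p \<and> p < m \<and> m < q) \<or> (p < l \<and> l < q \<and> q < m)))"

definition degree :: "'a set set \<Rightarrow> 'a \<Rightarrow> nat" where
  "degree E v = card {w. {v, w} \<in> E}"

definition star0_like :: "'a set \<Rightarrow> 'a set set \<Rightarrow> bool" where
  "star0_like V TE \<longleftrightarrow> (\<exists>!v. v \<in> V \<and> 2 < degree TE v)"

definition colourable :: "'a set \<Rightarrow> 'a set set \<Rightarrow> nat \<Rightarrow> bool" where
  "colourable V E k \<longleftrightarrow>
     (\<exists>c :: 'a \<Rightarrow> nat. (\<forall>v\<in>V. c v < k) \<and> (\<forall>u v. {u, v} \<in> E \<longrightarrow> c u \<noteq> c v))"

end

theory Submission
  imports Defs
begin


lemma chain_low_deg: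
  fixes X :: "'b set" and pos :: "'b \<Rightarrow> nat" and adj :: "'b \<Rightarrow> 'b \<Rightarrow> bool"
  assumes fin: "finite X" and ne: "X \<noteq> {}" and inj: "inj_on pos X"
    and irr: "\<forall>v. \<not> adj v v" and sym: "\<forall>u v. adj u v \<longrightarrow> adj v u"
    and nc: "\<forall>a\<in>X. \<forall>b\<in>X. \<forall>c\<in>X. \<forall>d\<in>X. pos a < pos b \<longrightarrow> pos b < pos c \<longrightarrow> pos c < pos d
               \<longrightarrow> adj a c \<longrightarrow> adj b d \<longrightarrow> False"
  shows "\<exists>v\<in>X. \<exists>p q. \<forall>u\<in>X. adj v u \<longrightarrow> u = p \<or> u = q"
proof -
  define btw where "btw a b = {x\<in>X. pos a < pos x \<and> pos x < pos b}" for a b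
  define Q where "Q ab = (fst ab \<in> X \<and> snd ab \<in> X \<and> adj (fst ab) (snd ab) \<and> pos (fst ab) < pos (snd ab)
      \<and> btw (fst ab) (snd ab) \<noteq> {})" for ab
  have finb: "finite (btw a b)" for a b unfolding btw_def using fin by auto
  have ncr: "False" if "a\<in>X" "b\<in>X" "c\<in>X" "d\<in>X" "pos a < pos b" "pos b < pos c" "pos c < pos d"
     "adj a c" "adj b d" for a b c d using nc that by blast
  show ?thesis
  proof (cases "\<exists>ab. Q ab")
    case True
    then obtain ab where "Q ab" by blast
    from ex_has_least_nat[of Q ab "\<lambda>ab. card (btw (fst ab) (snd ab))", OF this]
    obtain ab' where Qab: "Q ab'" and minab: "\<forall>y. Q y \<longrightarrow> card (btw (fst ab') (snd ab')) \<le> card (btw (fst y) (snd y))"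
      by blast
    define a where "a = fst ab'"
    define b where "b = snd ab'"
    have aX: "a \<in> X" and bX: "b \<in> X" and adjab: "adj a b" and ab: "pos a < pos b" and bne: "btw a b \<noteq> {}"
      using Qab unfolding Q_def a_def b_def by auto
    have minab': "\<And>x y. x \<in> X \<Longrightarrow> y \<in> X \<Longrightarrow> adj x y \<Longrightarrow> pos x < pos y \<Longrightarrow> btw x y \<noteq> {} \<Longrightarrow>
        card (btw a b) \<le> card (btw x y)"
    proof -
      fix x y assume "x \<in> X" "y \<in> X" "adj x y" "pos x < pos y" "btw x y \<noteq> {}"
      then have "Q (x,y)" unfolding Q_def by simp
      from minab[rule_format, OF this] show "card (btw a b) \<le> card (btw x y)" unfolding a_def b_def by simp
    qed
    from bne obtain c0 where "c0 \<in> btw a b" by blast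
    from ex_has_least_nat[of "\<lambda>x. x \<in> btw a b" c0 pos, OF this]
    obtain c where cb: "c \<in> btw a b" and cmin: "\<forall>y. y \<in> btw a b \<longrightarrow> pos c \<le> pos y" by blast
    have cX: "c \<in> X" and ac: "pos a < pos c" and cb': "pos c < pos b" using cb unfolding btw_def by auto
    from ex_has_least_nat[of "\<lambda>x. x \<in> X \<and> pos c < pos x" b pos] bX cb'
    obtain s where sX: "s \<in> X" and cs: "pos c < pos s" and smin: "\<forall>y. y \<in> X \<and> pos c < pos y \<longrightarrow> pos s \<le> pos y"
      by blast
    have "\<forall>u\<in>X. adj c u \<longrightarrow> u = a \<or> u = s"
    proof (intro ballI impI)
      fix u assume uX: "u \<in> X" and acu: "adj c u"
      consider "pos u < pos a" | "pos u = pos a" | "pos a < pos u \<and> pos u < pos c" | "pos u = pos c"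
        | "pos c < pos u" by linarith
      then show "u = a \<or> u = s"
      proof cases
        case 1
        have "adj u c" using acu sym by blast
        from ncr[OF uX aX cX bX 1 ac cb' this adjab] show ?thesis by simp
      next
        case 2 then show ?thesis using inj_onD[OF inj _ uX aX] by blast
      next
        case 3
        then have "u \<in> btw a b" using uX cb' unfolding btw_def by auto
        then show ?thesis using cmin 3 by fastforce
      next
        case 4 then have "u = c" using inj_onD[OF inj _ uX cX] by blast
        then show ?thesis using irr acu by blast
      next
        case 5
        have su: "pos s \<le> pos u" using smin uX 5 by blast
        show ?thesis
        proof (cases "pos s < pos u")
          case True
          have sbt: "s \<in> btw c u" using True cs sX unfolding btw_def by auto
          show ?thesis
          proof (cases "pos u \<le> pos b")
            case True
            have sub: "btw c u \<subseteq> btw a b - {c}" unfolding btw_def using ac True by auto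
            have "card (btw c u) < card (btw a b)"
            proof -
              have "card (btw c u) \<le> card (btw a b - {c})" using sub finb by (simp add: card_mono)
              also have "\<dots> < card (btw a b)" by (rule card_Diff1_less[OF finb cb])
              finally show ?thesis .
            qed
            moreover have "card (btw a b) \<le> card (btw c u)" using minab'[OF cX uX acu 5] sbt by blast
            ultimately show ?thesis by linarith
          next
            case False
            then have "pos b < pos u" by simp
            from ncr[OF aX cX bX uX ac cb' this adjab acu] show ?thesis by simp
          qed
        next
          case False
          then have "pos s = pos u" using su by linarith
          then have "u = s" using inj_onD[OF inj _ uX sX] by metis
          then show ?thesis by simp
        qed
      qed
    qed
    then show ?thesis using cX by blast
  next
    case False
    from ne obtain x0 where "x0 \<in> X" by blast
    from ex_has_least_nat[of "\<lambda>x. x \<in> X" x0 pos, OF this]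
    obtain x where xX: "x \<in> X" and xmin: "\<forall>y. y \<in> X \<longrightarrow> pos x \<le> pos y" by blast
    show ?thesis
    proof (cases "\<exists>y\<in>X. pos x < pos y")
      case True
      then obtain y where "y \<in> X" "pos x < pos y" by blast
      from ex_has_least_nat[of "\<lambda>z. z \<in> X \<and> pos x < pos z" y pos] this
      obtain s where sX: "s \<in> X" and xs: "pos x < pos s" and smin: "\<forall>y. y \<in> X \<and> pos x < pos y \<longrightarrow> pos s \<le> pos y"
        by blast
      have "\<forall>u\<in>X. adj x u \<longrightarrow> u = s \<or> u = s"
      proof (intro ballI impI)
        fix u assume uX: "u \<in> X" and axu: "adj x u"
        have "u \<noteq> x" using irr axu by blast
        then have xu: "pos x < pos u" proof -
          have "pos u \<noteq> pos x" using inj_onD[OF inj _ uX xX] \<open>u \<noteq> x\<close> by blast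
          moreover have "pos x \<le> pos u" using xmin uX by blast
          ultimately show ?thesis by linarith
        qed
        then have su: "pos s \<le> pos u" using smin uX by blast
        show "u = s \<or> u = s"
        proof (cases "pos s < pos u")
          case True
          then have "s \<in> btw x u" using xs sX unfolding btw_def by auto
          then have "Q (x, u)" unfolding Q_def using xX uX axu xu by auto
          then show ?thesis using False by blast
        next
          case False
          then have "pos s = pos u" using su by simp
          then show ?thesis using inj_onD[OF inj _ sX uX] by simp
        qed
      qed
      then show ?thesis using xX by blast
    next
      case False2: False
      have "\<forall>u\<in>X. adj x u \<longrightarrow> u = x \<or> u = x"
      proof (intro ballI impI)
        fix u assume uX: "u \<in> X" and axu: "adj x u"
        have "u \<noteq> x" using irr axu by blast
        then have xu: "pos x < pos u" proof -
          have "pos u \<noteq> pos x" using inj_onD[OF inj _ uX xX] \<open>u \<noteq> x\<close> by blast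
          moreover have "pos x \<le> pos u" using xmin uX by blast
          ultimately show ?thesis by linarith
        qed
        then show "u = x \<or> u = x" using False2 uX by blast
      qed
      then show ?thesis using xX by blast
    qed
  qed
qed

lemma chain_col3:
  fixes X :: "'b set" and pos :: "'b \<Rightarrow> nat" and adj :: "'b \<Rightarrow> 'b \<Rightarrow> bool"
  assumes fin: "finite X" and inj: "inj_on pos X"
    and irr: "\<forall>v. \<not> adj v v" and sym: "\<forall>u v. adj u v \<longrightarrow> adj v u"
    and nc: "\<forall>a\<in>X. \<forall>b\<in>X. \<forall>c\<in>X. \<forall>d\<in>X. pos a < pos b \<longrightarrow> pos b < pos c \<longrightarrow> pos c < pos d
               \<longrightarrow> adj a c \<longrightarrow> adj b d \<longrightarrow> False"
  shows "\<exists>col. (\<forall>v\<in>X. col v < (3::nat)) \<and> (\<forall>u\<in>X. \<forall>v\<in>X. adj u v \<longrightarrow> col u \<noteq> col v)"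
  using fin inj nc
proof (induction "card X" arbitrary: X rule: less_induct)
  case less
  show ?case
  proof (cases "X = {}")
    case True then show ?thesis by auto
  next
    case False
    from chain_low_deg[OF less.prems(1) False less.prems(2) irr sym less.prems(3)]
    obtain v p q where vX: "v \<in> X" and vn: "\<forall>u\<in>X. adj v u \<longrightarrow> u = p \<or> u = q" by blast
    let ?Y = "X - {v}"
    have h1: "card ?Y < card X" by (rule card_Diff1_less[OF less.prems(1) vX])
    have h2: "finite ?Y" using less.prems(1) by simp
    have h3: "inj_on pos ?Y" using less.prems(2) inj_on_subset[of pos X ?Y] by blast
    have h4: "\<forall>a\<in>?Y. \<forall>b\<in>?Y. \<forall>c\<in>?Y. \<forall>d\<in>?Y. pos a < pos b \<longrightarrow> pos b < pos c \<longrightarrow> pos c < pos d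
               \<longrightarrow> adj a c \<longrightarrow> adj b d \<longrightarrow> False" using less.prems(3) by blast
    from less.hyps[OF h1 h2 h3 h4] obtain col where c1: "\<forall>v\<in>?Y. col v < (3::nat)" and c2: "\<forall>u\<in>?Y. \<forall>w\<in>?Y. adj u w \<longrightarrow> col u \<noteq> col w"
      by blast
    obtain k :: nat where k: "k < 3" "k \<noteq> col p" "k \<noteq> col q"
    proof -
      have "\<exists>k::nat. k < 3 \<and> k \<noteq> col p \<and> k \<noteq> col q"
      proof (cases "0 \<noteq> col p \<and> 0 \<noteq> col q")
        case True then show ?thesis by (intro exI[of _ 0]) simp
      next
        case F1: False
        show ?thesis
        proof (cases "1 \<noteq> col p \<and> 1 \<noteq> col q")
          case True then show ?thesis by (intro exI[of _ 1]) simp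
        next
          case False then show ?thesis using F1 by (intro exI[of _ 2]) auto
        qed
      qed
      then show ?thesis using that by blast
    qed
    define col' where "col' = col(v := k)"
    have "\<forall>w\<in>X. col' w < 3" using c1 k unfolding col'_def by auto
    moreover have "\<forall>u\<in>X. \<forall>w\<in>X. adj u w \<longrightarrow> col' u \<noteq> col' w"
    proof (intro ballI impI)
      fix u w assume uX: "u \<in> X" and wX: "w \<in> X" and a: "adj u w"
      show "col' u \<noteq> col' w"
      proof (cases "u = v")
        case True
        then have "w \<noteq> v" using irr a by blast
        moreover have "w = p \<or> w = q" using vn True a wX by blast
        ultimately show ?thesis using True k unfolding col'_def by auto
      next
        case False
        show ?thesis
        proof (cases "w = v")
          case True
          moreover have "u = p \<or> u = q" using vn True a uX sym by blast
          ultimately show ?thesis using False k unfolding col'_def by auto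
        next
          case False2: False
          then show ?thesis using c2 False uX wX a unfolding col'_def by auto
        qed
      qed
    qed
    ultimately show ?thesis by blast
  qed
qed

lemma chain_col3_fix:
  fixes X :: "'b set" and pos :: "'b \<Rightarrow> nat" and adj :: "'b \<Rightarrow> 'b \<Rightarrow> bool"
  assumes fin: "finite X" and inj: "inj_on pos X"
    and irr: "\<forall>v. \<not> adj v v" and sym: "\<forall>u v. adj u v \<longrightarrow> adj v u"
    and nc: "\<forall>a\<in>X. \<forall>b\<in>X. \<forall>c\<in>X. \<forall>d\<in>X. pos a < pos b \<longrightarrow> pos b < pos c \<longrightarrow> pos c < pos d
               \<longrightarrow> adj a c \<longrightarrow> adj b d \<longrightarrow> False"
    and z: "z \<in> X" and k: "k < (3::nat)"
  shows "\<exists>col. (\<forall>v\<in>X. col v < (3::nat)) \<and> (\<forall>u\<in>X. \<forall>v\<in>X. adj u v \<longrightarrow> col u \<noteq> col v) \<and> col z = k"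
proof -
  obtain col where c1: "\<forall>v\<in>X. col v < (3::nat)" and c2: "\<forall>u\<in>X. \<forall>v\<in>X. adj u v \<longrightarrow> col u \<noteq> col v"
    using chain_col3[OF fin inj irr sym nc] by blast
  define col' where "col' v = (if col v = col z then k else if col v = k then col z else col v)" for v
  have "col' z = k" unfolding col'_def by simp
  moreover have "\<forall>v\<in>X. col' v < 3" unfolding col'_def using c1 z k by auto
  moreover have "\<forall>u\<in>X. \<forall>v\<in>X. adj u v \<longrightarrow> col' u \<noteq> col' v"
  proof (intro ballI impI)
    fix u v assume "u \<in> X" "v \<in> X" "adj u v"
    then have "col u \<noteq> col v" using c2 by blast
    then show "col' u \<noteq> col' v" unfolding col'_def by auto
  qed
  ultimately show ?thesis by blast
qed


lemma is_path_succ: "is_path V' E' P \<longleftrightarrow> P \<noteq> [] \<and> distinct P \<and> set P \<subseteq> V' \<and> successively (\<lambda>x y. {x,y} \<in> E') P"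
  by (simp add: is_path_def successively_conv_nth)

lemma successively_take: "successively R xs \<Longrightarrow> successively R (take n xs)"
proof -
  assume "successively R xs"
  then have "successively R (take n xs @ drop n xs)" by simp
  then show ?thesis by (simp only: successively_append_iff)
qed

lemma is_path_take: assumes "is_path V' E' P" "0 < n" shows "is_path V' E' (take n P)"
proof -
  have a: "P \<noteq> []" "distinct P" "set P \<subseteq> V'" "successively (\<lambda>x y. {x,y} \<in> E') P"
    using assms(1) unfolding is_path_succ by auto
  have "take n P \<noteq> []" using a(1) assms(2) by simp
  moreover have "distinct (take n P)" using a(2) by simp
  moreover have "set (take n P) \<subseteq> V'" using a(3) set_take_subset by (rule order_trans[rotated])
  moreover have "successively (\<lambda>x y. {x,y} \<in> E') (take n P)" using a(4) by (rule successively_take)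
  ultimately show ?thesis unfolding is_path_succ by simp
qed

lemma is_path_tl: "is_path V' E' (a # P) \<Longrightarrow> P \<noteq> [] \<Longrightarrow> is_path V' E' P"
  unfolding is_path_succ by (auto simp: successively_Cons)

lemma path_unique:
  assumes acyc: "acyclic_graph V' E'"
  shows "is_path V' E' P \<Longrightarrow> is_path V' E' Q \<Longrightarrow> hd P = hd Q \<Longrightarrow> last P = last Q \<Longrightarrow> P = Q"
proof (induction P arbitrary: Q)
  case Nil
  then show ?case unfolding is_path_def by simp
next
  case (Cons a P1)
  from Cons.prems(2) have "Q \<noteq> []" unfolding is_path_def by simp
  then obtain Q1 where Q: "Q = a # Q1" using Cons.prems(3) by (cases Q) auto
  have dP: "distinct (a # P1)" and dQ: "distinct (a # Q1)"
    using Cons.prems(1,2) Q unfolding is_path_def by auto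
  have sP: "successively (\<lambda>x y. {x,y} \<in> E') (a # P1)" and sQ: "successively (\<lambda>x y. {x,y} \<in> E') (a # Q1)"
    using Cons.prems(1,2) Q unfolding is_path_succ by auto
  have VP: "set (a # P1) \<subseteq> V'" and VQ: "set (a # Q1) \<subseteq> V'"
    using Cons.prems(1,2) Q unfolding is_path_def by auto
  show ?case
  proof (cases "P1 = []")
    case True
    show ?thesis
    proof (rule ccontr)
      assume "a # P1 \<noteq> Q"
      then have "Q1 \<noteq> []" using Q True by simp
      then have "last Q = last Q1" "last Q1 \<in> set Q1" using Q by auto
      moreover have "last Q = a" using Cons.prems(4) True by simp
      ultimately show False using dQ by auto
    qed
  next
    case P1ne: False
    show ?thesis
    proof (cases "Q1 = []")
      case True
      then have "last (a # P1) = a" using Cons.prems(4) Q by simp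
      moreover have "last (a # P1) = last P1" "last P1 \<in> set P1" using P1ne by auto
      ultimately show ?thesis using dP by auto
    next
      case Q1ne: False
      have lastPQ: "last P1 = last Q1" using Cons.prems(4) Q P1ne Q1ne by simp
      show ?thesis
      proof (cases "hd P1 = hd Q1")
        case True
        have "P1 = Q1"
          using Cons.IH[OF is_path_tl[OF Cons.prems(1) P1ne] is_path_tl[OF Cons.prems(2)[unfolded Q] Q1ne] True lastPQ] .
        then show ?thesis using Q by simp
      next
        case hdne: False
        have ex: "\<exists>i. i < length P1 \<and> P1 ! i \<in> set Q1"
          using P1ne Q1ne lastPQ by (metis last_conv_nth last_in_set diff_less length_greater_0_conv zero_less_one)
        obtain i where iP: "i < length P1" and iQ: "P1 ! i \<in> set Q1"
          and imin: "\<forall>k. k < length P1 \<and> P1 ! k \<in> set Q1 \<longrightarrow> i \<le> k"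
          using ex_has_least_nat[of "\<lambda>k. k < length P1 \<and> P1 ! k \<in> set Q1"] ex by (metis (no_types, lifting))
        obtain j where jQ: "j < length Q1" and ji: "Q1 ! j = P1 ! i"
          using iQ by (metis in_set_conv_nth)
        define C where "C = (a # take (Suc i) P1) @ rev (take j Q1)"
        have lastA: "last (a # take (Suc i) P1) = P1 ! i"
          using iP by (simp add: take_Suc_conv_app_nth)
        have s1: "successively (\<lambda>x y. {x,y} \<in> E') (a # take (Suc i) P1)"
          using successively_take[OF sP, of "Suc (Suc i)"] by simp
        have s2: "successively (\<lambda>x y. {x,y} \<in> E') (rev (take j Q1))"
        proof -
          have "successively (\<lambda>x y. {x,y} \<in> E') Q1" using sQ by (cases Q1) auto
          then have "successively (\<lambda>x y. {x,y} \<in> E') (take j Q1)" by (rule successively_take)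
          then show ?thesis by (simp add: insert_commute)
        qed
        have junc: "j > 0 \<Longrightarrow> {P1 ! i, hd (rev (take j Q1))} \<in> E'"
        proof -
          assume j0: "j > 0"
          have "hd (rev (take j Q1)) = last (take j Q1)" by (simp add: hd_rev)
          also have "\<dots> = take j Q1 ! (j - 1)" using j0 jQ by (subst last_conv_nth) (auto simp: min_def)
          also have "\<dots> = Q1 ! (j - 1)" using j0 by simp
          finally have "hd (rev (take j Q1)) = Q1 ! (j - 1)" .
          moreover have "{Q1 ! (j-1), Q1 ! Suc (j-1)} \<in> E'"
            using successively_nth[OF sQ, of j] jQ j0 by simp
          ultimately show ?thesis using ji j0 by (simp add: insert_commute)
        qed
        have sC: "successively (\<lambda>x y. {x,y} \<in> E') C"
          unfolding C_def successively_append_iff using s1 s2 junc lastA by auto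
        have dC: "distinct C"
        proof -
          have d1: "distinct (a # take (Suc i) P1)" using dP by (metis distinct_take take_Suc_Cons)
          have d2: "distinct (rev (take j Q1))" using dQ by simp
          have disj: "set (a # take (Suc i) P1) \<inter> set (rev (take j Q1)) = {}"
          proof (rule ccontr)
            assume "set (a # take (Suc i) P1) \<inter> set (rev (take j Q1)) \<noteq> {}"
            then obtain x where x1: "x \<in> set (a # take (Suc i) P1)" and x2: "x \<in> set (take j Q1)" by auto
            have xQ: "x \<in> set Q1" using x2 by (meson in_set_takeD)
            show False
            proof (cases "x = a")
              case True then show False using xQ dQ by simp
            next
              case False
              then have "x \<in> set (take (Suc i) P1)" using x1 by simp
              then obtain k where k: "k < length (take (Suc i) P1)" "take (Suc i) P1 ! k = x"
                by (metis in_set_conv_nth)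
              then have kk: "k \<le> i" "k < length P1" "P1 ! k = x" by auto
              then have "i \<le> k" using imin xQ by blast
              then have "x = Q1 ! j" using kk ji by simp
              moreover obtain m where "m < length (take j Q1)" "take j Q1 ! m = x" using x2 by (metis in_set_conv_nth)
              then have "m < j" "Q1 ! m = x" by auto
              ultimately show False using dQ jQ by (simp add: nth_eq_iff_index_eq)
            qed
          qed
          show ?thesis unfolding C_def using d1 d2 disj by (simp only: distinct_append)
        qed
        have VC: "set C \<subseteq> V'"
          unfolding C_def using VP VQ by (auto dest: in_set_takeD)
        have lenC: "3 \<le> length C"
        proof -
          have "i \<noteq> 0 \<or> j \<noteq> 0"
          proof (rule ccontr)
            assume "\<not> (i \<noteq> 0 \<or> j \<noteq> 0)"
            then have "P1 ! 0 = Q1 ! 0" using ji by simp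
            then show False using hdne P1ne Q1ne by (simp add: hd_conv_nth)
          qed
          then show ?thesis unfolding C_def using iP jQ by auto
        qed
        have lastC: "last C = hd Q1"
        proof (cases "j = 0")
          case True
          then have "last C = P1 ! i" unfolding C_def using lastA by simp
          then show ?thesis using ji True Q1ne by (simp add: hd_conv_nth)
        next
          case False
          have ne: "rev (take j Q1) \<noteq> []" using False Q1ne by simp
          then have "last C = last (rev (take j Q1))" unfolding C_def by (simp only: last_append) simp
          also have "\<dots> = hd (take j Q1)" by (simp add: last_rev)
          also have "\<dots> = hd Q1" using False Q1ne by simp
          finally show ?thesis .
        qed
        have hdC: "hd C = a" unfolding C_def by simp
        have "{a, hd Q1} \<in> E'" using sQ Q1ne by (cases Q1) auto
        then have "{last C, hd C} \<in> E'" using lastC hdC by (simp add: insert_commute)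
        moreover have "is_path V' E' C" unfolding is_path_succ using sC dC VC lenC by auto
        ultimately show ?thesis using acyc lenC unfolding acyclic_graph_def by blast
      qed
    qed
  qed
qed

lemma nth_in_take: "i < n \<Longrightarrow> i < length xs \<Longrightarrow> xs ! i \<in> set (take n xs)"
  by (metis length_take min_less_iff_conj nth_mem nth_take)


locale NT =
  fixes V :: "'a set" and E TE :: "'a set set" and r :: 'a
  assumes finV: "finite V" and sgE: "simple_graph V E" and rV: "r \<in> V"
    and span: "spanning_tree V E TE" and normal: "normal_tree V E TE r"
    and nosec: "\<not> (\<exists>e\<in>E. \<exists>e'\<in>E. secant V TE r e e')"
    and star: "star0_like V TE"
begin

lemma TEsub: "TE \<subseteq> E" using span unfolding spanning_tree_def by simp
lemma sgT: "simple_graph V TE" using span unfolding spanning_tree_def is_tree_def by simp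
lemma conT: "connected_graph V TE" using span unfolding spanning_tree_def is_tree_def by simp
lemma acT: "acyclic_graph V TE" using span unfolding spanning_tree_def is_tree_def by simp

definition rpath where "rpath x = (THE P. is_path V TE P \<and> hd P = r \<and> last P = x)"

lemma rpath_eq: assumes "is_path V TE P" "hd P = r" shows "rpath (last P) = P"
  unfolding rpath_def
proof (rule the_equality)
  show "is_path V TE P \<and> hd P = r \<and> last P = last P" using assms by simp
next
  fix Q assume "is_path V TE Q \<and> hd Q = r \<and> last Q = last P"
  then show "Q = P" using path_unique[OF acT, of Q P] assms by simp
qed

lemma rpath_ok: assumes "x \<in> V" shows "is_path V TE (rpath x)" "hd (rpath x) = r" "last (rpath x) = x"
proof -
  obtain P where P: "is_path V TE P" "hd P = r" "last P = x"
    using conT rV assms unfolding connected_graph_def by blast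
  then have "rpath x = P" using rpath_eq by blast
  then show "is_path V TE (rpath x)" "hd (rpath x) = r" "last (rpath x) = x" using P by auto
qed

lemma rpath_ne: "x \<in> V \<Longrightarrow> rpath x \<noteq> []" using rpath_ok(1) unfolding is_path_def by blast

lemma rpath_nth: assumes "is_path V TE P" "hd P = r" "i < length P" shows "rpath (P ! i) = take (Suc i) P"
proof -
  have p: "is_path V TE (take (Suc i) P)" using is_path_take[OF assms(1)] by simp
  have h: "hd (take (Suc i) P) = r" using assms(2,3) by (cases P) auto
  have l: "last (take (Suc i) P) = P ! i" using assms(3) by (simp add: take_Suc_conv_app_nth)
  show ?thesis using rpath_eq[OF p h] l by simp
qed

definition dep where "dep x = length (rpath x) - 1"

lemma in_rpath: assumes "x \<in> V" "y \<in> set (rpath x)"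
  shows "y \<in> V" "dep y < length (rpath x)" "rpath x ! dep y = y" "rpath y = take (Suc (dep y)) (rpath x)"
proof -
  obtain k where k: "k < length (rpath x)" "rpath x ! k = y" using assms(2) by (metis in_set_conv_nth)
  have ry: "rpath y = take (Suc k) (rpath x)" using rpath_nth[OF rpath_ok(1,2)[OF assms(1)] k(1)] k(2) by simp
  then have "dep y = k" unfolding dep_def using k(1) by simp
  then show "dep y < length (rpath x)" "rpath x ! dep y = y" "rpath y = take (Suc (dep y)) (rpath x)"
    using k ry by auto
  show "y \<in> V" using rpath_ok(1)[OF assms(1)] assms(2) unfolding is_path_def by blast
qed

lemma le_iff: "tree_le V TE r y x \<longleftrightarrow> x \<in> V \<and> y \<in> set (rpath x)"
proof
  assume "tree_le V TE r y x"
  then obtain P where P: "is_path V TE P" "hd P = r" "last P = x" "y \<in> set P" unfolding tree_le_def by blast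
  then have "x \<in> V" unfolding is_path_def by (metis last_in_set subsetD)
  moreover have "rpath x = P" using rpath_eq[OF P(1,2)] P(3) by simp
  ultimately show "x \<in> V \<and> y \<in> set (rpath x)" using P by simp
next
  assume "x \<in> V \<and> y \<in> set (rpath x)"
  then show "tree_le V TE r y x" unfolding tree_le_def using rpath_ok by blast
qed

lemma dep_last: assumes "x \<in> V" shows "rpath x ! dep x = x" "length (rpath x) = Suc (dep x)"
proof -
  have ne: "rpath x \<noteq> []" using rpath_ne assms .
  then show "length (rpath x) = Suc (dep x)" unfolding dep_def by simp
  then show "rpath x ! dep x = x" using rpath_ok(3)[OF assms] ne by (simp add: last_conv_nth)
qed

lemma le_V: "tree_le V TE r y x \<Longrightarrow> y \<in> V \<and> x \<in> V" using le_iff in_rpath(1) by blast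

lemma le_refl: "x \<in> V \<Longrightarrow> tree_le V TE r x x"
  unfolding le_iff using rpath_ok(3) rpath_ne by (metis last_in_set)

lemma le_trans: assumes "tree_le V TE r z y" "tree_le V TE r y x" shows "tree_le V TE r z x"
proof -
  have xV: "x \<in> V" and yP: "y \<in> set (rpath x)" and zP: "z \<in> set (rpath y)" using assms le_iff by auto
  have "rpath y = take (Suc (dep y)) (rpath x)" using in_rpath(4)[OF xV yP] .
  then have "z \<in> set (rpath x)" using zP in_set_takeD by metis
  then show ?thesis using xV le_iff by simp
qed

lemma le_dep: "tree_le V TE r y x \<Longrightarrow> dep y \<le> dep x"
  unfolding le_iff using in_rpath(2) dep_last(2) by fastforce

lemma le_dep_eq: assumes "tree_le V TE r y x" "dep y = dep x" shows "y = x"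
proof -
  have xV: "x \<in> V" and yP: "y \<in> set (rpath x)" using assms le_iff by auto
  have "y = rpath x ! dep y" using in_rpath(3)[OF xV yP] by (rule sym)
  also have "\<dots> = rpath x ! dep x" by (simp only: assms(2))
  also have "\<dots> = x" by (rule dep_last(1)[OF xV])
  finally show ?thesis .
qed

lemma le_dep_less: "tree_le V TE r y x \<Longrightarrow> y \<noteq> x \<Longrightarrow> dep y < dep x"
  using le_dep le_dep_eq by fastforce

lemma le_chain: assumes "tree_le V TE r y x" "tree_le V TE r z x" "dep y \<le> dep z" shows "tree_le V TE r y z"
proof -
  have xV: "x \<in> V" and yP: "y \<in> set (rpath x)" and zP: "z \<in> set (rpath x)" using assms le_iff by auto
  have rz: "rpath z = take (Suc (dep z)) (rpath x)" using in_rpath(4)[OF xV zP] .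
  have "y = rpath x ! dep y" "dep y < length (rpath x)" using in_rpath(2,3)[OF xV yP] by auto
  then have "y \<in> set (take (Suc (dep z)) (rpath x))" using assms(3) nth_in_take[of "dep y" "Suc (dep z)" "rpath x"]
    by simp
  then show ?thesis unfolding le_iff using rz in_rpath(1)[OF xV zP] by simp
qed

lemma le_comp: "tree_le V TE r y x \<Longrightarrow> tree_le V TE r z x \<Longrightarrow> tree_le V TE r y z \<or> tree_le V TE r z y"
  using le_chain by (meson nat_le_linear)

lemma r_le: "x \<in> V \<Longrightarrow> tree_le V TE r r x"
  unfolding le_iff using rpath_ok(2) rpath_ne by (metis hd_in_set)

lemma dep0: assumes "y \<in> V" "dep y = 0" shows "y = r"
  using dep_last(1)[OF assms(1)] rpath_ok(2)[OF assms(1)] rpath_ne[OF assms(1)] assms(2) by (simp add: hd_conv_nth)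

lemma dep_r: "dep r = 0"
proof -
  have "is_path V TE [r]" unfolding is_path_def using rV by simp
  then have "rpath r = [r]" using rpath_eq[of "[r]"] by simp
  then show ?thesis unfolding dep_def by simp
qed

lemma dep_card: assumes "x \<in> V" shows "dep x < card V"
proof -
  have "distinct (rpath x)" "set (rpath x) \<subseteq> V" using rpath_ok(1)[OF assms] unfolding is_path_def by auto
  then have "length (rpath x) \<le> card V" using finV by (metis card_mono distinct_card)
  then show ?thesis using dep_last(2)[OF assms] by simp
qed

lemma edgeE: assumes "{x,y} \<in> E" shows "x \<in> V" "y \<in> V" "x \<noteq> y"
proof -
  obtain u v where "{x,y} = {u,v}" "u \<in> V" "v \<in> V" "u \<noteq> v" using sgE assms unfolding simple_graph_def by blast
  then show "x \<in> V" "y \<in> V" "x \<noteq> y" by (auto simp: doubleton_eq_iff)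
qed

lemma edgeT: assumes "{x,y} \<in> TE" shows "x \<in> V" "y \<in> V"
proof -
  obtain u v where "{x,y} = {u,v}" "u \<in> V" "v \<in> V" using sgT assms unfolding simple_graph_def by blast
  then show "x \<in> V" "y \<in> V" by (auto simp: doubleton_eq_iff)
qed

lemma edge_comp: "{x,y} \<in> E \<Longrightarrow> tree_le V TE r x y \<or> tree_le V TE r y x"
  using normal unfolding normal_tree_def by blast

lemma NC:
  assumes z: "z \<in> V" and a: "a \<in> set (rpath z)" and b: "b \<in> set (rpath z)" and c: "c \<in> set (rpath z)"
    and d: "d \<in> set (rpath z)"
    and ab: "dep a < dep b" and bc: "dep b < dep c" and cd: "dep c < dep d"
    and ac: "{a,c} \<in> E" and bd: "{b,d} \<in> E"
  shows False
proof -
  let ?P = "rpath z"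
  have "secant V TE r {a,c} {b,d}"
    unfolding secant_def
  proof (intro exI conjI)
    show "is_path V TE ?P" "hd ?P = r" using rpath_ok[OF z] by auto
    show "dep a < dep c" "dep b < dep d" "dep c < length ?P" "dep d < length ?P"
      using ab bc cd in_rpath(2)[OF z] c d by auto
    show "{a, c} = {?P ! dep a, ?P ! dep c}" "{b, d} = {?P ! dep b, ?P ! dep d}"
      using in_rpath(3)[OF z] a b c d by auto
    show "1 < dep c - dep a" "1 < dep d - dep b" using ab bc cd by auto
    show "dep a < dep b \<and> dep b < dep c \<and> dep c < dep d \<or> dep b < dep a \<and> dep a < dep d \<and> dep d < dep c"
      using ab bc cd by auto
  qed
  then show False using nosec ac bd by blast
qed

lemma deg3: assumes "{w,a} \<in> TE" "{w,b} \<in> TE" "{w,c} \<in> TE" "a \<noteq> b" "a \<noteq> c" "b \<noteq> c"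
  shows "2 < degree TE w"
proof -
  have sub: "{a,b,c} \<subseteq> {x. {w,x} \<in> TE}" using assms by auto
  have "{x. {w,x} \<in> TE} \<subseteq> V" using edgeT by blast
  then have fin: "finite {x. {w,x} \<in> TE}" using finV by (rule finite_subset)
  have "card {a,b,c} = 3" using assms by auto
  then have "3 \<le> card {x. {w,x} \<in> TE}" using card_mono[OF fin sub] by simp
  then show ?thesis unfolding degree_def by simp
qed

definition v0 where "v0 = (THE v. v \<in> V \<and> 2 < degree TE v)"

lemma v0: "v0 \<in> V" "2 < degree TE v0" "\<And>v. v \<in> V \<Longrightarrow> 2 < degree TE v \<Longrightarrow> v = v0"
proof -
  have ex1: "\<exists>!v. v \<in> V \<and> 2 < degree TE v" using star unfolding star0_like_def .
  then have "v0 \<in> V \<and> 2 < degree TE v0" unfolding v0_def by (rule theI')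
  then show "v0 \<in> V" "2 < degree TE v0" by auto
  fix v assume "v \<in> V" "2 < degree TE v"
  then show "v = v0" using ex1 \<open>v0 \<in> V \<and> 2 < degree TE v0\<close> by blast
qed

lemma meetL:
  assumes xV: "x \<in> V" and yV: "y \<in> V" and nxy: "\<not> tree_le V TE r x y" and nyx: "\<not> tree_le V TE r y x"
    and tx: "tree_le V TE r t x" and ty: "tree_le V TE r t y" and tr: "t \<noteq> r"
  shows "tree_le V TE r t v0 \<and> tree_le V TE r v0 x \<and> tree_le V TE r v0 y"
proof -
  define p where "p = rpath x"
  define q where "q = rpath y"
  have tp: "t \<in> set p" using tx le_iff unfolding p_def by blast
  have tq: "t \<in> set q" using ty le_iff unfolding q_def by blast
  define k where "k = dep t"
  have kp: "k < length p" using in_rpath(2)[OF xV tp[unfolded p_def]] unfolding p_def k_def .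
  have kq: "k < length q" using in_rpath(2)[OF yV tq[unfolded q_def]] unfolding q_def k_def .
  have tk1: "rpath t = take (Suc k) p" using in_rpath(4)[OF xV tp[unfolded p_def]] unfolding p_def k_def .
  have tk2: "rpath t = take (Suc k) q" using in_rpath(4)[OF yV tq[unfolded q_def]] unfolding q_def k_def .
  have tk: "take (Suc k) p = take (Suc k) q" using tk1 tk2 by simp
  define J where "J = {j. j < length p \<and> j < length q \<and> take (Suc j) p = take (Suc j) q}"
  have kJ: "k \<in> J" unfolding J_def using kp kq tk by simp
  have "J \<subseteq> {..<length p}" unfolding J_def by blast
  then have finJ: "finite J" using finite_subset by blast
  define j where "j = Max J"
  have jJ: "j \<in> J" unfolding j_def using finJ kJ Max_in by blast
  have kj: "k \<le> j" unfolding j_def using finJ kJ by simp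
  have jp: "j < length p" and jq: "j < length q" and tj: "take (Suc j) p = take (Suc j) q" using jJ unfolding J_def by auto
  have pP: "is_path V TE p" unfolding p_def using rpath_ok(1)[OF xV] .
  have qP: "is_path V TE q" unfolding q_def using rpath_ok(1)[OF yV] .
  have xp: "x \<in> set p" unfolding p_def using rpath_ok(3)[OF xV] rpath_ne[OF xV] last_in_set by metis
  have yq: "y \<in> set q" unfolding q_def using rpath_ok(3)[OF yV] rpath_ne[OF yV] last_in_set by metis
  have sjp: "Suc j < length p"
  proof (rule ccontr)
    assume "\<not> Suc j < length p"
    then have "length p = Suc j" using jp by simp
    then have "p = take (Suc j) q" using tj by simp
    then have "set p \<subseteq> set q" using set_take_subset by metis
    then have "x \<in> set (rpath y)" using xp unfolding q_def by blast
    then show False using nxy le_iff yV by blast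
  qed
  have sjq: "Suc j < length q"
  proof (rule ccontr)
    assume "\<not> Suc j < length q"
    then have "length q = Suc j" using jq by simp
    then have "q = take (Suc j) p" using tj by simp
    then have "set q \<subseteq> set p" using set_take_subset by metis
    then have "y \<in> set (rpath x)" using yq unfolding p_def by blast
    then show False using nyx le_iff xV by blast
  qed
  have diff: "p ! Suc j \<noteq> q ! Suc j"
  proof
    assume eq: "p ! Suc j = q ! Suc j"
    have "take (Suc (Suc j)) p = take (Suc (Suc j)) q"
      using tj eq sjp sjq by (simp add: take_Suc_conv_app_nth)
    then have "Suc j \<in> J" unfolding J_def using sjp sjq by simp
    then have "Suc j \<le> j" unfolding j_def using finJ by simp
    then show False by simp
  qed
  have pjq: "p ! i = q ! i" if "i \<le> j" for i
  proof -
    have "take (Suc j) p ! i = take (Suc j) q ! i" using tj by simp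
    then show ?thesis using that by simp
  qed
  have k1: "k \<noteq> 0"
  proof
    assume k0: "k = 0"
    have "t \<in> V" using le_V[OF tx] by blast
    then show False using dep0[of t] tr k0 unfolding k_def by blast
  qed
  then have j1: "j \<noteq> 0" using kj by simp
  define w where "w = p ! j"
  have "w \<in> set p" using jp unfolding w_def by simp
  then have wV: "w \<in> V" using pP unfolding is_path_def by blast
  have allp: "\<forall>i. Suc i < length p \<longrightarrow> {p ! i, p ! Suc i} \<in> TE" using pP unfolding is_path_def by blast
  have allq: "\<forall>i. Suc i < length q \<longrightarrow> {q ! i, q ! Suc i} \<in> TE" using qP unfolding is_path_def by blast
  have sj: "Suc (j - 1) = j" using j1 by simp
  have e1': "{p ! (j - 1), p ! Suc (j - 1)} \<in> TE" using allp[rule_format, of "j - 1"] sj jp by simp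
  have e1: "{w, p ! (j - 1)} \<in> TE" using e1' sj unfolding w_def by (simp add: insert_commute)
  have e2: "{w, p ! Suc j} \<in> TE" using allp[rule_format, of j] sjp unfolding w_def by simp
  have e3: "{w, q ! Suc j} \<in> TE" using allq[rule_format, of j] sjq pjq[of j] unfolding w_def by simp
  have dp: "distinct p" using pP unfolding is_path_def by blast
  have dq: "distinct q" using qP unfolding is_path_def by blast
  have n1: "p ! (j - 1) \<noteq> p ! Suc j" using dp sjp j1 by (simp add: nth_eq_iff_index_eq)
  have n2: "p ! (j - 1) \<noteq> q ! Suc j"
  proof -
    have "p ! (j - 1) = q ! (j - 1)" using pjq by simp
    then show ?thesis using dq sjq j1 by (simp add: nth_eq_iff_index_eq)
  qed
  have "2 < degree TE w" using deg3[OF e1 e2 e3 n1 n2 diff] .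
  then have wv0: "w = v0" using v0(3) wV by blast
  have hp: "hd p = r" unfolding p_def using rpath_ok(2)[OF xV] .
  have rw: "rpath w = take (Suc j) p" using rpath_nth[OF pP hp jp] unfolding w_def .
  have "t \<in> set (rpath w)"
  proof -
    have "t = p ! k" using in_rpath(3)[OF xV tp[unfolded p_def]] unfolding p_def k_def by simp
    then show ?thesis using rw kj kp nth_in_take[of k "Suc j" p] by simp
  qed
  then have "tree_le V TE r t v0" using le_iff wV wv0 by simp
  moreover have "tree_le V TE r v0 x" using le_iff xV wv0 \<open>w \<in> set p\<close> unfolding p_def by simp
  moreover have "w \<in> set q" using jq pjq[of j] unfolding w_def by simp
  then have "tree_le V TE r v0 y" using le_iff yV wv0 unfolding q_def by simp
  ultimately show ?thesis by simp
qed

end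
context NT begin

definition S where "S = {x. tree_le V TE r x v0}"

lemma S_V: "S \<subseteq> V" unfolding S_def using le_V by blast
lemma r_S: "r \<in> S" unfolding S_def using r_le v0(1) by blast
lemma S_rpath: "x \<in> S \<Longrightarrow> x \<in> set (rpath v0)" unfolding S_def le_iff by simp

lemma O_S_edge: assumes "u \<in> V - S" "s \<in> S" "{s,u} \<in> E" shows "tree_le V TE r s u"
proof -
  have "\<not> tree_le V TE r u s"
  proof
    assume "tree_le V TE r u s"
    then have "tree_le V TE r u v0" using assms(2) le_trans unfolding S_def by blast
    then show False using assms(1) unfolding S_def by blast
  qed
  then show ?thesis using edge_comp[OF assms(3)] by blast
qed

lemma useA: assumes "b \<in> S" "b \<noteq> r" "tree_le V TE r b u" "u \<in> V - S" shows "tree_le V TE r v0 u"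
proof (rule ccontr)
  assume n1: "\<not> tree_le V TE r v0 u"
  have n2: "\<not> tree_le V TE r u v0" using assms(4) unfolding S_def by blast
  have "tree_le V TE r b v0" using assms(1) unfolding S_def by blast
  then have "tree_le V TE r v0 u" using meetL[OF _ v0(1) n2 n1 assms(3) _ assms(2)] assms(4) by blast
  then show False using n1 by blast
qed

definition br where "br u = hd (filter (\<lambda>x. x \<notin> S) (rpath u))"

lemma br1: assumes "u \<in> V - S" shows "tree_le V TE r (br u) u" "br u \<notin> S" "br u \<in> V"
proof -
  have "u \<in> set (rpath u)" using assms rpath_ok(3) rpath_ne by (metis DiffD1 last_in_set)
  then have "u \<in> set (filter (\<lambda>x. x \<notin> S) (rpath u))" using assms by simp
  then have ne: "filter (\<lambda>x. x \<notin> S) (rpath u) \<noteq> []" by (metis list.set(1) empty_iff)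
  then have "br u \<in> set (filter (\<lambda>x. x \<notin> S) (rpath u))" unfolding br_def by (rule hd_in_set)
  then show "tree_le V TE r (br u) u" "br u \<notin> S" using assms le_iff by auto
  then show "br u \<in> V" using le_V by blast
qed

lemma br2: assumes "u \<in> V - S" "u' \<in> V - S" "tree_le V TE r u u'" shows "br u = br u'"
proof -
  have u'V: "u' \<in> V" and uP: "u \<in> set (rpath u')" using assms(3) le_iff by auto
  have "rpath u = take (Suc (dep u)) (rpath u')" using in_rpath(4)[OF u'V uP] .
  then have split: "rpath u' = rpath u @ drop (Suc (dep u)) (rpath u')" by simp
  have "u \<in> set (rpath u)" using assms rpath_ok(3) rpath_ne by (metis DiffD1 last_in_set)
  then have "u \<in> set (filter (\<lambda>x. x \<notin> S) (rpath u))" using assms by simp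
  then have ne: "filter (\<lambda>x. x \<notin> S) (rpath u) \<noteq> []" by (metis list.set(1) empty_iff)
  have "filter (\<lambda>x. x \<notin> S) (rpath u') = filter (\<lambda>x. x \<notin> S) (rpath u) @ filter (\<lambda>x. x \<notin> S) (drop (Suc (dep u)) (rpath u'))"
    by (subst split) simp
  then show ?thesis unfolding br_def using ne by simp
qed

lemma br3: assumes "u \<in> V - S" "u' \<in> V - S" "br u = br u'"
  shows "tree_le V TE r u u' \<or> tree_le V TE r u' u"
proof (rule ccontr)
  assume n: "\<not> (tree_le V TE r u u' \<or> tree_le V TE r u' u)"
  have "br u \<noteq> r"
  proof
    assume "br u = r"
    then show False using br1(2)[OF assms(1)] r_S by simp
  qed
  moreover have uV: "u \<in> V" and u'V: "u' \<in> V" using assms by auto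
  moreover have n1: "\<not> tree_le V TE r u u'" and n2: "\<not> tree_le V TE r u' u" using n by auto
  moreover have t1: "tree_le V TE r (br u) u" using br1(1)[OF assms(1)] .
  moreover have t2: "tree_le V TE r (br u) u'" using br1(1)[OF assms(2)] assms(3) by simp
  ultimately have "tree_le V TE r (br u) v0"
    using meetL[OF uV u'V n1 n2 t1 t2] by blast
  then show False using br1(2)[OF assms(1)] unfolding S_def by blast
qed

lemma S_inj: assumes "x \<in> S" "y \<in> S" "dep x = dep y" shows "x = y"
proof -
  have a: "tree_le V TE r x v0" using assms(1) unfolding S_def by simp
  have b: "tree_le V TE r y v0" using assms(2) unfolding S_def by simp
  have "tree_le V TE r x y" using le_chain[OF a b] assms(3) by simp
  then show ?thesis using le_dep_eq[OF _ assms(3)] by blast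
qed

lemma lex_le: assumes "(a::nat) * N + x < b * N + y" "x < N" "y < N" shows "a \<le> b"
proof (rule ccontr)
  assume "\<not> a \<le> b"
  then have "Suc b \<le> a" by simp
  then have "Suc b * N \<le> a * N" by (rule mult_le_mono1)
  then have "N + b * N \<le> a * N" by simp
  then show False using assms by linarith
qed

lemma lex_eq: assumes "(a::nat) * N + x = b * N + y" "x < N" "y < N" shows "a = b \<and> x = y"
proof -
  have "\<not> a < b"
  proof
    assume "a < b"
    then have "Suc a * N \<le> b * N" by (intro mult_le_mono1) simp
    then have "N + a * N \<le> b * N" by simp
    then show False using assms by linarith
  qed
  moreover have "\<not> b < a"
  proof
    assume "b < a"
    then have "Suc b * N \<le> a * N" by (intro mult_le_mono1) simp
    then have "N + b * N \<le> a * N" by simp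
    then show False using assms by linarith
  qed
  ultimately have "a = b" by simp
  then show ?thesis using assms by simp
qed

definition NN where "NN = card V"
definition W1 where "W1 = {s \<in> S. \<exists>u \<in> V - S. {s,u} \<in> E}"
definition W2 where "W2 = {u \<in> V - S. \<exists>s \<in> S. {s,u} \<in> E}"
definition X1 where "X1 = insert None (Some ` S)"
definition pos1 where "pos1 a = (case a of None \<Rightarrow> NN | Some x \<Rightarrow> dep x)"
definition adj1 where "adj1 a b = (case a of None \<Rightarrow> (case b of None \<Rightarrow> False | Some y \<Rightarrow> y \<in> W1)
      | Some x \<Rightarrow> (case b of None \<Rightarrow> x \<in> W1 | Some y \<Rightarrow> {x,y} \<in> E))"

lemma pos1_simps: "pos1 None = NN" "pos1 (Some x) = dep x" unfolding pos1_def by simp_all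
lemma adj1_simps: "adj1 None None = False" "adj1 None (Some y) = (y \<in> W1)" "adj1 (Some x) None = (x \<in> W1)"
  "adj1 (Some x) (Some y) = ({x,y} \<in> E)" unfolding adj1_def by simp_all

lemma noloop: "{x} \<notin> E" using edgeE(3)[of x x] by auto

lemma depN: "x \<in> V \<Longrightarrow> dep x < NN" unfolding NN_def using dep_card by blast

lemma X1_cases: "z \<in> X1 \<Longrightarrow> z = None \<or> (\<exists>x. z = Some x \<and> x \<in> S)" unfolding X1_def by blast

lemma fin1: "finite X1" unfolding X1_def using S_V finV finite_subset by blast

lemma inj1: "inj_on pos1 X1"
proof (rule inj_onI)
  fix a b assume a: "a \<in> X1" and b: "b \<in> X1" and e: "pos1 a = pos1 b"
  show "a = b"
  proof (cases a)
    case None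
    show ?thesis
    proof (cases b)
      case None then show ?thesis using \<open>a = None\<close> by simp
    next
      case (Some y)
      then have "y \<in> S" using b X1_cases by blast
      then have "dep y < NN" using depN S_V by blast
      then show ?thesis using e None Some pos1_simps by simp
    qed
  next
    case (Some x)
    then have xS: "x \<in> S" using a X1_cases by blast
    show ?thesis
    proof (cases b)
      case None
      have "dep x < NN" using depN S_V xS by blast
      then show ?thesis using e None Some pos1_simps by simp
    next
      case (Some y)
      then have yS: "y \<in> S" using b X1_cases by blast
      have "dep x = dep y" using e \<open>a = Some x\<close> Some pos1_simps by simp
      then show ?thesis using S_inj xS yS \<open>a = Some x\<close> Some by simp
    qed
  qed
qed

lemma irr1: "\<forall>v. \<not> adj1 v v"
proof
  fix v show "\<not> adj1 v v" by (cases v) (simp_all add: adj1_simps noloop)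
qed

lemma sym1: "\<forall>u v. adj1 u v \<longrightarrow> adj1 v u"
proof (intro allI impI)
  fix u v assume "adj1 u v"
  then show "adj1 v u" by (cases u; cases v) (simp_all add: adj1_simps insert_commute)
qed

lemma nc1: "\<forall>a\<in>X1. \<forall>b\<in>X1. \<forall>c\<in>X1. \<forall>d\<in>X1. pos1 a < pos1 b \<longrightarrow> pos1 b < pos1 c \<longrightarrow> pos1 c < pos1 d
               \<longrightarrow> adj1 a c \<longrightarrow> adj1 b d \<longrightarrow> False"
proof (intro ballI impI)
  fix a b c d assume X: "a \<in> X1" "b \<in> X1" "c \<in> X1" "d \<in> X1" and o1: "pos1 a < pos1 b" and o2: "pos1 b < pos1 c"
    and o3: "pos1 c < pos1 d" and ac: "adj1 a c" and bd: "adj1 b d"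
  have le_N: "pos1 z \<le> NN" if "z \<in> X1" for z
  proof (cases z)
    case None then show ?thesis by (simp add: pos1_simps)
  next
    case (Some x)
    then have "x \<in> S" using that X1_cases by blast
    then show ?thesis using Some depN S_V pos1_simps by (simp add: less_imp_le subsetD)
  qed
  have notN: "z \<noteq> None" if "pos1 z < NN" for z
  proof
    assume "z = None"
    then have "pos1 z = NN" by (simp add: pos1_simps)
    then show False using that by simp
  qed
  have pc: "pos1 c < NN" using le_N[OF X(4)] o3 by linarith
  have pb: "pos1 b < NN" using pc o2 by linarith
  have pa: "pos1 a < NN" using pb o1 by linarith
  obtain a' where a': "a = Some a'" "a' \<in> S" using X1_cases[OF X(1)] notN[OF pa] by blast
  obtain b' where b': "b = Some b'" "b' \<in> S" using X1_cases[OF X(2)] notN[OF pb] by blast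
  obtain c' where c': "c = Some c'" "c' \<in> S" using X1_cases[OF X(3)] notN[OF pc] by blast
  have d1: "dep a' < dep b'" "dep b' < dep c'" using o1 o2 a' b' c' by (simp_all add: pos1_simps)
  have ac': "{a',c'} \<in> E" using ac a' c' by (simp add: adj1_simps)
  show False
  proof (cases d)
    case None
    then have "b' \<in> W1" using bd b' by (simp add: adj1_simps)
    then obtain u where uO: "u \<in> V - S" and bu: "{b',u} \<in> E" unfolding W1_def by blast
    have bule: "tree_le V TE r b' u" using O_S_edge[OF uO b'(2) bu] .
    have "b' \<noteq> r" using d1 dep_r by auto
    then have v0u: "tree_le V TE r v0 u" using useA[OF b'(2) _ bule uO] by blast
    have les: "tree_le V TE r x u" if "x \<in> S" for x using that le_trans v0u unfolding S_def by blast
    have uV: "u \<in> V" using uO by blast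
    have "c' \<noteq> u" using c'(2) uO by blast
    then have cu: "dep c' < dep u" using le_dep_less les c'(2) by blast
    have uu: "u \<in> set (rpath u)" using le_refl[OF uV] le_iff by blast
    have ia: "a' \<in> set (rpath u)" using les[OF a'(2)] le_iff by blast
    have ib: "b' \<in> set (rpath u)" using les[OF b'(2)] le_iff by blast
    have ic: "c' \<in> set (rpath u)" using les[OF c'(2)] le_iff by blast
    show False using NC[OF uV ia ib ic uu d1 cu ac' bu] .
  next
    case (Some d')
    have d'S: "d' \<in> S" using X(4) Some X1_cases by blast
    have bd': "{b',d'} \<in> E" using bd b' Some by (simp add: adj1_simps)
    have "dep c' < dep d'" using o3 c' Some by (simp add: pos1_simps)
    then show False using NC[OF v0(1) S_rpath[OF a'(2)] S_rpath[OF b'(2)] S_rpath[OF c'(2)] S_rpath[OF d'S] d1 _ ac' bd']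
      by blast
  qed
qed

lemma col1_ex: "\<exists>col1. (\<forall>v\<in>X1. col1 v < (3::nat)) \<and> (\<forall>u\<in>X1. \<forall>v\<in>X1. adj1 u v \<longrightarrow> col1 u \<noteq> col1 v) \<and> col1 None = 2"
proof -
  have "None \<in> X1" unfolding X1_def by simp
  then show ?thesis using chain_col3_fix[OF fin1 inj1 irr1 sym1 nc1, of None 2] by simp
qed

end

context NT begin

definition idx :: "'a \<Rightarrow> nat" where "idx = (SOME f. inj_on f V)"

lemma idx_inj: "inj_on idx V"
proof -
  have "\<exists>f :: 'a \<Rightarrow> nat. inj_on f V" using finite_imp_inj_to_nat_seg[OF finV] by blast
  then show ?thesis unfolding idx_def by (rule someI_ex)
qed

definition key where "key u = idx (br u) * NN + dep u"
definition X2 where "X2 = insert None (Some ` (V - S))"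
definition pos2 where "pos2 a = (case a of None \<Rightarrow> 0 | Some x \<Rightarrow> Suc (key x))"
definition adj2 where "adj2 a b = (case a of None \<Rightarrow> (case b of None \<Rightarrow> False | Some y \<Rightarrow> y \<in> W2)
      | Some x \<Rightarrow> (case b of None \<Rightarrow> x \<in> W2 | Some y \<Rightarrow> {x,y} \<in> E))"

lemma pos2_simps: "pos2 None = 0" "pos2 (Some x) = Suc (key x)" unfolding pos2_def by simp_all
lemma adj2_simps: "adj2 None None = False" "adj2 None (Some y) = (y \<in> W2)" "adj2 (Some x) None = (x \<in> W2)"
  "adj2 (Some x) (Some y) = ({x,y} \<in> E)" unfolding adj2_def by simp_all

lemma X2_cases: "z \<in> X2 \<Longrightarrow> z = None \<or> (\<exists>x. z = Some x \<and> x \<in> V - S)" unfolding X2_def by blast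

lemma fin2: "finite X2" unfolding X2_def using finV by simp

lemma br_eq_idx: "u \<in> V - S \<Longrightarrow> u' \<in> V - S \<Longrightarrow> idx (br u) = idx (br u') \<Longrightarrow> br u = br u'"
  using idx_inj br1(3) by (meson inj_onD)

lemma key_eq: assumes "u \<in> V - S" "u' \<in> V - S" "key u = key u'" shows "u = u'"
proof -
  have "dep u < NN" "dep u' < NN" using depN assms by auto
  then have "idx (br u) = idx (br u') \<and> dep u = dep u'"
    using lex_eq[of "idx (br u)" NN "dep u" "idx (br u')" "dep u'"] assms(3) unfolding key_def by blast
  then have b: "br u = br u'" and dd: "dep u = dep u'" using br_eq_idx assms by auto
  have "tree_le V TE r u u' \<or> tree_le V TE r u' u" using br3[OF assms(1,2) b] .
  then show ?thesis using dd le_dep_eq by metis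
qed

lemma inj2: "inj_on pos2 X2"
proof (rule inj_onI)
  fix a b assume a: "a \<in> X2" and b: "b \<in> X2" and e: "pos2 a = pos2 b"
  show "a = b"
  proof (cases a)
    case None
    then show ?thesis using e by (cases b) (simp_all add: pos2_simps)
  next
    case (Some x)
    then have xO: "x \<in> V - S" using a X2_cases by blast
    show ?thesis
    proof (cases b)
      case None then show ?thesis using e Some by (simp add: pos2_simps)
    next
      case (Some y)
      then have yO: "y \<in> V - S" using b X2_cases by blast
      have "key x = key y" using e \<open>a = Some x\<close> Some by (simp add: pos2_simps)
      then show ?thesis using key_eq xO yO \<open>a = Some x\<close> Some by simp
    qed
  qed
qed

lemma irr2: "\<forall>v. \<not> adj2 v v"
proof
  fix v show "\<not> adj2 v v" by (cases v) (simp_all add: adj2_simps noloop)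
qed

lemma sym2: "\<forall>u v. adj2 u v \<longrightarrow> adj2 v u"
proof (intro allI impI)
  fix u v assume "adj2 u v"
  then show "adj2 v u" by (cases u; cases v) (simp_all add: adj2_simps insert_commute)
qed

lemma mid: assumes "u \<in> V - S" "v \<in> V - S" "w \<in> V - S" "key u < key v" "key v < key w" "br u = br w"
  shows "br v = br u \<and> dep u < dep v \<and> dep v < dep w"
proof -
  have du: "dep u < NN" and dv: "dep v < NN" and dw: "dep w < NN" using depN assms by auto
  have i1: "idx (br u) \<le> idx (br v)" using lex_le[of "idx (br u)" NN "dep u" "idx (br v)" "dep v"] assms(4) du dv
    unfolding key_def by blast
  have i2: "idx (br v) \<le> idx (br w)" using lex_le[of "idx (br v)" NN "dep v" "idx (br w)" "dep w"] assms(5) dv dw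
    unfolding key_def by blast
  have ie: "idx (br v) = idx (br u)" using i1 i2 assms(6) by simp
  then have "br v = br u" using br_eq_idx assms(1,2) by simp
  moreover have "dep u < dep v" using assms(4) ie unfolding key_def by simp
  moreover have "dep v < dep w" using assms(5) ie assms(6) unfolding key_def by simp
  ultimately show ?thesis by simp
qed

lemma below: assumes "u \<in> V - S" "w \<in> V - S" "br u = br w" "dep u < dep w" shows "tree_le V TE r u w"
proof -
  have "tree_le V TE r u w \<or> tree_le V TE r w u" using br3[OF assms(1,2,3)] .
  moreover have "\<not> tree_le V TE r w u" using le_dep assms(4) by fastforce
  ultimately show ?thesis by blast
qed

lemma cbr: assumes "u \<in> V - S" "w \<in> V - S" "{u,w} \<in> E" shows "br u = br w"
proof -
  have "tree_le V TE r u w \<or> tree_le V TE r w u" using edge_comp[OF assms(3)] .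
  then show ?thesis using br2 assms(1,2) by metis
qed

lemma nc2: "\<forall>a\<in>X2. \<forall>b\<in>X2. \<forall>c\<in>X2. \<forall>d\<in>X2. pos2 a < pos2 b \<longrightarrow> pos2 b < pos2 c \<longrightarrow> pos2 c < pos2 d
               \<longrightarrow> adj2 a c \<longrightarrow> adj2 b d \<longrightarrow> False"
proof (intro ballI impI)
  fix a b c d assume X: "a \<in> X2" "b \<in> X2" "c \<in> X2" "d \<in> X2" and o1: "pos2 a < pos2 b" and o2: "pos2 b < pos2 c"
    and o3: "pos2 c < pos2 d" and ac: "adj2 a c" and bd: "adj2 b d"
  have notN: "z \<noteq> None" if "0 < pos2 z" for z
  proof
    assume "z = None"
    then show False using that by (simp add: pos2_simps)
  qed
  have "0 < pos2 b" using o1 by simp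
  then have "b \<noteq> None" using notN by blast
  then obtain b' where b': "b = Some b'" "b' \<in> V - S" using X2_cases[OF X(2)] by blast
  have "0 < pos2 c" using o2 by simp
  then have "c \<noteq> None" using notN by blast
  then obtain c' where c': "c = Some c'" "c' \<in> V - S" using X2_cases[OF X(3)] by blast
  have "0 < pos2 d" using o3 by simp
  then have "d \<noteq> None" using notN by blast
  then obtain d' where d': "d = Some d'" "d' \<in> V - S" using X2_cases[OF X(4)] by blast
  have k2: "key b' < key c'" "key c' < key d'" using o2 o3 b' c' d' by (simp_all add: pos2_simps)
  have bd': "{b',d'} \<in> E" using bd b' d' by (simp add: adj2_simps)
  have bbd: "br b' = br d'" using cbr[OF b'(2) d'(2) bd'] .
  have m: "br c' = br b'" "dep b' < dep c'" "dep c' < dep d'" using mid[OF b'(2) c'(2) d'(2) k2 bbd] by auto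
  have bled: "tree_le V TE r b' d'" using below[OF b'(2) d'(2) bbd] m by linarith
  have cbd: "br c' = br d'" using m bbd by simp
  have cled: "tree_le V TE r c' d'" using below[OF c'(2) d'(2) cbd m(3)] .
  have d'V: "d' \<in> V" using d' by blast
  have inP: "x \<in> set (rpath d')" if "tree_le V TE r x d'" for x using that le_iff by blast
  have dP: "d' \<in> set (rpath d')" using inP le_refl d'V by blast
  show False
  proof (cases a)
    case None
    then have "c' \<in> W2" using ac c' by (simp add: adj2_simps)
    then obtain s where sS: "s \<in> S" and sc: "{s,c'} \<in> E" unfolding W2_def by blast
    have slec: "tree_le V TE r s c'" using O_S_edge[OF c'(2) sS sc] .
    then have sled: "tree_le V TE r s d'" using cled le_trans by blast
    have "dep s < dep b'"
    proof (rule ccontr)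
      assume "\<not> dep s < dep b'"
      then have "tree_le V TE r b' s" using le_chain[OF bled sled] by simp
      then have "tree_le V TE r b' v0" using sS le_trans unfolding S_def by blast
      then have "b' \<in> S" unfolding S_def by simp
      then show False using b' by blast
    qed
    then show False using NC[OF d'V inP[OF sled] inP[OF bled] inP[OF cled] dP _ m(2,3) sc bd'] by blast
  next
    case (Some a')
    have aO: "a' \<in> V - S" using X(1) Some X2_cases by blast
    have ac': "{a',c'} \<in> E" using ac Some c' by (simp add: adj2_simps)
    have acb: "br a' = br c'" using cbr[OF aO c'(2) ac'] .
    have k1: "key a' < key b'" using o1 Some b' by (simp add: pos2_simps)
    have ab: "br a' = br b'" using acb m by simp
    have "dep a' < dep b'" using mid[OF aO b'(2) c'(2) k1 k2(1)] acb by simp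
    moreover have "br a' = br d'" using ab bbd by simp
    ultimately have aled: "tree_le V TE r a' d'" using below[OF aO d'(2)] m by linarith
    show False using NC[OF d'V inP[OF aled] inP[OF bled] inP[OF cled] dP \<open>dep a' < dep b'\<close> m(2,3) ac' bd'] .
  qed
qed

lemma col2_ex: "\<exists>col2. (\<forall>v\<in>X2. col2 v < (3::nat)) \<and> (\<forall>u\<in>X2. \<forall>v\<in>X2. adj2 u v \<longrightarrow> col2 u \<noteq> col2 v) \<and> col2 None = 0"
proof -
  have "None \<in> X2" unfolding X2_def by simp
  then show ?thesis using chain_col3_fix[OF fin2 inj2 irr2 sym2 nc2, of None 0] by simp
qed

lemma colour_main: "colourable V E 4"
proof -
  obtain col1 where c1a: "\<forall>v\<in>X1. col1 v < (3::nat)" and c1b: "\<forall>u\<in>X1. \<forall>v\<in>X1. adj1 u v \<longrightarrow> col1 u \<noteq> col1 v"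
    and c1c: "col1 None = 2" using col1_ex by blast
  obtain col2 where c2a: "\<forall>v\<in>X2. col2 v < (3::nat)" and c2b: "\<forall>u\<in>X2. \<forall>v\<in>X2. adj2 u v \<longrightarrow> col2 u \<noteq> col2 v"
    and c2c: "col2 None = 0" using col2_ex by blast
  have N1: "None \<in> X1" unfolding X1_def by simp
  have N2: "None \<in> X2" unfolding X2_def by simp
  have S1: "Some x \<in> X1" if "x \<in> S" for x using that unfolding X1_def by simp
  have S2: "Some x \<in> X2" if "x \<in> V - S" for x using that unfolding X2_def by simp
  define col where "col x = (if x \<in> S then col1 (Some x) else (if col2 (Some x) = 0 then 0 else Suc (col2 (Some x))))" for x
  have "\<forall>v\<in>V. col v < 4"
  proof
    fix v assume vV: "v \<in> V"
    show "col v < 4"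
    proof (cases "v \<in> S")
      case True
      then have "col1 (Some v) < 3" using c1a S1 by blast
      then show ?thesis using True unfolding col_def by simp
    next
      case False
      then have "col2 (Some v) < 3" using c2a S2 vV by blast
      then show ?thesis using False unfolding col_def by simp
    qed
  qed
  moreover have "\<forall>u v. {u,v} \<in> E \<longrightarrow> col u \<noteq> col v"
  proof (intro allI impI)
    fix u v assume e: "{u,v} \<in> E"
    have uV: "u \<in> V" and vV: "v \<in> V" using edgeE[OF e] by auto
    have mixed: "col s \<noteq> col w" if sS: "s \<in> S" and wO: "w \<in> V - S" and sw: "{s,w} \<in> E" for s w
    proof -
      have "s \<in> W1" unfolding W1_def using sS wO sw by blast
      then have "adj1 (Some s) None" by (simp add: adj1_simps)
      then have "col1 (Some s) \<noteq> col1 None" using c1b S1[OF sS] N1 by blast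
      then have "col1 (Some s) \<noteq> 2" using c1c by simp
      moreover have "col1 (Some s) < 3" using c1a S1[OF sS] by blast
      ultimately have cs: "col1 (Some s) < 2" by simp
      have "w \<in> W2" unfolding W2_def using sS wO sw by blast
      then have "adj2 None (Some w)" by (simp add: adj2_simps)
      then have "col2 None \<noteq> col2 (Some w)" using c2b S2[OF wO] N2 by blast
      then have cw: "col2 (Some w) \<noteq> 0" using c2c by simp
      have "col s = col1 (Some s)" using sS unfolding col_def by simp
      moreover have "col w = Suc (col2 (Some w))" using wO cw unfolding col_def by simp
      ultimately show ?thesis using cs cw by simp
    qed
    show "col u \<noteq> col v"
    proof (cases "u \<in> S")
      case uS: True
      show ?thesis
      proof (cases "v \<in> S")
        case vS: True
        have "adj1 (Some u) (Some v)" using e by (simp add: adj1_simps)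
        then have "col1 (Some u) \<noteq> col1 (Some v)" using c1b S1[OF uS] S1[OF vS] by blast
        then show ?thesis using uS vS unfolding col_def by simp
      next
        case False
        then show ?thesis using mixed[OF uS _ e] vV by blast
      qed
    next
      case uN: False
      show ?thesis
      proof (cases "v \<in> S")
        case vS: True
        have "{v,u} \<in> E" using e by (simp add: insert_commute)
        then have "col v \<noteq> col u" using mixed[OF vS] uN uV by blast
        then show ?thesis by simp
      next
        case vN: False
        have "adj2 (Some u) (Some v)" using e by (simp add: adj2_simps)
        then have ne: "col2 (Some u) \<noteq> col2 (Some v)" using c2b S2 uN vN uV vV by blast
        show ?thesis using uN vN ne unfolding col_def by simp
      qed
    qed
  qed
  ultimately show ?thesis unfolding colourable_def by blast
qed

end

theorem proposition5:
  fixes V :: "'a set" and E TE :: "'a set set" and r :: 'a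
  assumes "finite V"
    and "simple_graph V E"
    and "r \<in> V"
    and "spanning_tree V E TE"
    and "normal_tree V E TE r"
    and "\<not> (\<exists>e\<in>E. \<exists>e'\<in>E. secant V TE r e e')"
    and "star0_like V TE"
  shows "colourable V E 4"
proof -
  interpret NT V E TE r by (intro NT.intro assms)
  show ?thesis by (rule colour_main)
qed

end
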